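(* Let $\mathscr{A}=(Q,\{0,1\},\delta)$ be an NFA with $Q=\{q_1,\dots,q_n\}$ and let $\ell>0$ be an integer. For every $t=0,1,\dots,\ell$, every truth assignment $\varphi$ on the set $X=\{x_1,\dots,x_\ell\}$ of letter variables has a unique extension $\overline{\varphi}$ to the token variables $y_{ij}^s$ ($i,j=1,\dots,n$, $s=0,\dots,t$) that makes all clauses in $C_0$ and all formulas $\Psi_{ij}^s$ ($i,j=1,\dots,n$, $s=1,\dots,t$) true. Moreover, the token variable $y_{ij}^s$ gets value $1$ under $\overline{\varphi}$ if and only if after the moves $\varphi(x_1),\dots,\varphi(x_s)$ of the game $\Gamma$, one of the tokens held by the state $q_j$ is $\mathbf{i}$ (equivalently, $q_j\in q_i.\varphi(x_1)\cdots\varphi(x_s)$).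
   Context: An NFA is $\mathscr{A}=(Q,\Sigma,\delta)$ with $\delta\colon Q\times\Sigma\to\mathcal{P}(Q)$; $\delta$ extends to words by $\delta(X,\varepsilon)=X$ and $\delta(X,sw')=\bigcup_{q\in X}\delta(\delta(q,s),w')$, written $q.w=\delta(\{q\},w)$. The game $\Gamma$: initially each state $q_i$ holds exactly one token $\mathbf{i}$; at each move a symbol $a$ is chosen, and after the move token $\mathbf{i}$ is at state $p$ iff $p\in q.a$ for some state $q$ that held $\mathbf{i}$ just before the move (tokens at states $q$ with $q.a=\varnothing$ disappear). Variables: letter variables $x_1,\dots,x_\ell$ and token variables $y_{ij}^t$ for $i,j\in\{1,\dots,n\}$, $t\in\{0,\dots,\ell\}$. For $a\in\{0,1\}$ and $q\in Q$, let $P_a(q)=\{p\in Q\mid q\in p.a\}$. $C_0$ is the set of one-literal clauses $y_{ii}^0$ ($i=1,\dots,n$) and $\neg y_{ij}^0$ ($i\neq j$). For $t=1,\dots,\ell$ and $i,j=1,\dots,n$, $\Psi_{ij}^t$ is the propositional formula $y_{ij}^t\Longleftrightarrow\bigl(x_t\wedge\bigvee_{q_k\in P_1(q_j)}y_{ik}^{t-1}\bigr)\vee\bigl(\neg x_t\wedge\bigvee_{q_h\in P_0(q_j)}y_{ih}^{t-1}\bigr)$, where an empty disjunction is false. A truth assignment with $x_t\mapsto a$ is identified with choosing symbol $a$ at the $t$-th move. *)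

theory Defs
  imports "HOL-Library.FuncSet"
begin

(* Alphabet {0,1} is encoded as bool: False = symbol 0, True = symbol 1.
   States q_1..q_n are the natural numbers 1..n.
   An NFA is delta :: nat => bool => nat set (transition function). *)

type_synonym nfa = "nat \<Rightarrow> bool \<Rightarrow> nat set"

definition nfa_wf :: "nat \<Rightarrow> nfa \<Rightarrow> bool" where
  "nfa_wf n \<delta> \<longleftrightarrow> (\<forall>q\<in>{1..n}. \<forall>a. \<delta> q a \<subseteq> {1..n})"

fun delta_ext :: "nfa \<Rightarrow> nat set \<Rightarrow> bool list \<Rightarrow> nat set" where
  "delta_ext \<delta> X [] = X"
| "delta_ext \<delta> X (s # w) = (\<Union>q\<in>X. delta_ext \<delta> (\<delta> q s) w)"

(* The game Gamma: configuration  holds q i  = "state q holds token i". *)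
definition game_init :: "nat \<Rightarrow> nat \<Rightarrow> nat \<Rightarrow> bool" where
  "game_init n q i \<longleftrightarrow> q \<in> {1..n} \<and> q = i"

definition game_move :: "nfa \<Rightarrow> (nat \<Rightarrow> nat \<Rightarrow> bool) \<Rightarrow> bool \<Rightarrow> (nat \<Rightarrow> nat \<Rightarrow> bool)" where
  "game_move \<delta> H a = (\<lambda>p i. \<exists>q. H q i \<and> p \<in> \<delta> q a)"

definition game :: "nat \<Rightarrow> nfa \<Rightarrow> bool list \<Rightarrow> (nat \<Rightarrow> nat \<Rightarrow> bool)" where
  "game n \<delta> w = foldl (game_move \<delta>) (game_init n) w"

definition Pred :: "nat \<Rightarrow> nfa \<Rightarrow> bool \<Rightarrow> nat \<Rightarrow> nat set" where
  "Pred n \<delta> a q = {p \<in> {1..n}. q \<in> \<delta> p a}"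

(* token variable y_ij^s is represented by the triple (i,j,s);
   phi t is the truth value of letter variable x_t;
   psi is the truth assignment on token variables *)
definition token_vars :: "nat \<Rightarrow> nat \<Rightarrow> (nat \<times> nat \<times> nat) set" where
  "token_vars n t = {1..n} \<times> {1..n} \<times> {0..t}"

definition C0_sat :: "nat \<Rightarrow> (nat \<times> nat \<times> nat \<Rightarrow> bool) \<Rightarrow> bool" where
  "C0_sat n \<psi> \<longleftrightarrow> (\<forall>i\<in>{1..n}. \<psi> (i,i,0)) \<and>
                   (\<forall>i\<in>{1..n}. \<forall>j\<in>{1..n}. i \<noteq> j \<longrightarrow> \<not> \<psi> (i,j,0))"

definition Psi_sat :: "nat \<Rightarrow> nfa \<Rightarrow> (nat \<Rightarrow> bool) \<Rightarrow> (nat \<times> nat \<times> nat \<Rightarrow> bool)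
                        \<Rightarrow> nat \<Rightarrow> nat \<Rightarrow> nat \<Rightarrow> bool" where
  "Psi_sat n \<delta> \<phi> \<psi> i j t \<longleftrightarrow>
     (\<psi> (i,j,t) \<longleftrightarrow>
        (\<phi> t \<and> (\<exists>k\<in>Pred n \<delta> True j. \<psi> (i,k,t-1))) \<or>
        (\<not> \<phi> t \<and> (\<exists>h\<in>Pred n \<delta> False j. \<psi> (i,h,t-1))))"

definition all_sat :: "nat \<Rightarrow> nfa \<Rightarrow> (nat \<Rightarrow> bool) \<Rightarrow> nat \<Rightarrow> (nat \<times> nat \<times> nat \<Rightarrow> bool) \<Rightarrow> bool" where
  "all_sat n \<delta> \<phi> t \<psi> \<longleftrightarrow> C0_sat n \<psi> \<and>
     (\<forall>s\<in>{1..t}. \<forall>i\<in>{1..n}. \<forall>j\<in>{1..n}. Psi_sat n \<delta> \<phi> \<psi> i j s)"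

definition moves :: "(nat \<Rightarrow> bool) \<Rightarrow> nat \<Rightarrow> bool list" where
  "moves \<phi> s = map \<phi> [1..<s+1]"

end

theory Submission
  imports Defs
begin

lemma delta_ext_snoc:
  "delta_ext \<delta> X (w @ [a]) = (\<Union>q\<in>delta_ext \<delta> X w. \<delta> q a)"
  by (induction w arbitrary: X) auto

lemma delta_ext_wf:
  assumes "nfa_wf n \<delta>" "X \<subseteq> {1..n}"
  shows "delta_ext \<delta> X w \<subseteq> {1..n}"
  using assms(2)
proof (induction w arbitrary: X)
  case Nil then show ?case by simp
next
  case (Cons a w)
  have "\<And>q. q \<in> X \<Longrightarrow> \<delta> q a \<subseteq> {1..n}" using assms(1) Cons.prems unfolding nfa_wf_def by blast
  then have "\<And>q. q \<in> X \<Longrightarrow> delta_ext \<delta> (\<delta> q a) w \<subseteq> {1..n}" using Cons.IH by blast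
  then show ?case by (simp add: UN_least)
qed

lemma moves_Suc: "moves \<phi> (Suc s) = moves \<phi> s @ [\<phi> (Suc s)]"
  unfolding moves_def by simp

lemma game_snoc: "game n \<delta> (w @ [a]) = game_move \<delta> (game n \<delta> w) a"
  unfolding game_def by simp

lemma game_delta:
  assumes "i \<in> {1..n}"
  shows "game n \<delta> w j i \<longleftrightarrow> j \<in> delta_ext \<delta> {i} w"
proof (induction w arbitrary: j rule: rev_induct)
  case Nil then show ?case using assms by (auto simp: game_def game_init_def)
next
  case (snoc a w)
  show ?case by (auto simp add: game_snoc delta_ext_snoc game_move_def snoc.IH)
qed

lemma sat_char:
  assumes wf: "nfa_wf n \<delta>" and sat: "all_sat n \<delta> \<phi> t \<psi>"
  shows "s \<le> t \<Longrightarrow> i \<in> {1..n} \<Longrightarrow> j \<in> {1..n} \<Longrightarrow> \<psi> (i,j,s) \<longleftrightarrow> j \<in> delta_ext \<delta> {i} (moves \<phi> s)"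
proof (induction s arbitrary: j)
  case 0
  then show ?case using sat unfolding all_sat_def C0_sat_def moves_def by (cases "i = j") auto
next
  case (Suc s)
  have P: "Psi_sat n \<delta> \<phi> \<psi> i j (Suc s)" using sat Suc.prems unfolding all_sat_def by auto
  have sub: "delta_ext \<delta> {i} (moves \<phi> s) \<subseteq> {1..n}"
    using delta_ext_wf[OF wf] Suc.prems by auto
  have "\<psi> (i,j,Suc s) \<longleftrightarrow> (\<exists>k\<in>Pred n \<delta> (\<phi> (Suc s)) j. \<psi> (i,k,s))"
    using P unfolding Psi_sat_def by (cases "\<phi> (Suc s)") auto
  also have "\<dots> \<longleftrightarrow> (\<exists>k\<in>Pred n \<delta> (\<phi> (Suc s)) j. k \<in> delta_ext \<delta> {i} (moves \<phi> s))"
    using Suc.IH Suc.prems unfolding Pred_def by auto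
  also have "\<dots> \<longleftrightarrow> j \<in> delta_ext \<delta> {i} (moves \<phi> (Suc s))"
    using sub unfolding Pred_def by (auto simp: moves_Suc delta_ext_snoc) (meson atLeastAtMost_iff subsetD)
  finally show ?case .
qed

theorem lemma2:
  fixes n l t :: nat and \<delta> :: nfa and \<phi> :: "nat \<Rightarrow> bool"
  assumes "nfa_wf n \<delta>" and "l > 0" and "t \<le> l"
  shows "(\<exists>!\<psi>. \<psi> \<in> token_vars n t \<rightarrow>\<^sub>E UNIV \<and> all_sat n \<delta> \<phi> t \<psi>) \<and>
         (\<forall>\<psi>. \<psi> \<in> token_vars n t \<rightarrow>\<^sub>E UNIV \<and> all_sat n \<delta> \<phi> t \<psi> \<longrightarrow>
            (\<forall>i\<in>{1..n}. \<forall>j\<in>{1..n}. \<forall>s\<in>{0..t}.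
               (\<psi> (i,j,s) \<longleftrightarrow> game n \<delta> (moves \<phi> s) j i) \<and>
               (\<psi> (i,j,s) \<longleftrightarrow> j \<in> delta_ext \<delta> {i} (moves \<phi> s))))"
proof -
  define D where "D = (\<lambda>(i,j,s). j \<in> delta_ext \<delta> {i} (moves \<phi> s))"
  define \<psi>0 where "\<psi>0 = restrict D (token_vars n t)"
  have in0: "\<psi>0 \<in> token_vars n t \<rightarrow>\<^sub>E UNIV" unfolding \<psi>0_def by simp
  have C0: "C0_sat n \<psi>0"
    unfolding C0_sat_def
  proof (intro conjI ballI impI)
    fix i assume "i \<in> {1..n}"
    then show "\<psi>0 (i,i,0)" unfolding \<psi>0_def D_def token_vars_def moves_def by simp
  next
    fix i j assume "i \<in> {1..n}" "j \<in> {1..n}" "i \<noteq> j"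
    then show "\<not> \<psi>0 (i,j,0)" unfolding \<psi>0_def D_def token_vars_def moves_def by simp
  qed
  have Ps: "Psi_sat n \<delta> \<phi> \<psi>0 i j s" if s: "s \<in> {1..t}" and i: "i \<in> {1..n}" and j: "j \<in> {1..n}" for i j s
  proof -
    obtain s' where s': "s = Suc s'" using s by (cases s) auto
    have sub: "delta_ext \<delta> {i} (moves \<phi> s') \<subseteq> {1..n}"
      using delta_ext_wf[OF assms(1)] i by auto
    have v: "\<And>k. k \<in> {1..n} \<Longrightarrow> \<psi>0 (i,k,s') = (k \<in> delta_ext \<delta> {i} (moves \<phi> s'))"
      using s s' i unfolding \<psi>0_def D_def token_vars_def by auto
    have "\<psi>0 (i,j,s) \<longleftrightarrow> j \<in> delta_ext \<delta> {i} (moves \<phi> s)"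
      using s i j unfolding \<psi>0_def D_def token_vars_def by auto
    also have "\<dots> \<longleftrightarrow> (\<exists>k\<in>Pred n \<delta> (\<phi> s) j. k \<in> delta_ext \<delta> {i} (moves \<phi> s'))"
      using sub unfolding Pred_def by (auto simp: s' moves_Suc delta_ext_snoc) (meson atLeastAtMost_iff subsetD)
    also have "\<dots> \<longleftrightarrow> (\<exists>k\<in>Pred n \<delta> (\<phi> s) j. \<psi>0 (i,k,s'))"
      using v unfolding Pred_def by auto
    finally show ?thesis unfolding Psi_sat_def using s' by (cases "\<phi> s") auto
  qed
  have sat0: "all_sat n \<delta> \<phi> t \<psi>0" unfolding all_sat_def using C0 Ps by blast
  have char: "\<And>\<psi> i j s. all_sat n \<delta> \<phi> t \<psi> \<Longrightarrow> i \<in> {1..n} \<Longrightarrow> j \<in> {1..n} \<Longrightarrow> s \<in> {0..t} \<Longrightarrow>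
      (\<psi> (i,j,s) \<longleftrightarrow> game n \<delta> (moves \<phi> s) j i) \<and>
      (\<psi> (i,j,s) \<longleftrightarrow> j \<in> delta_ext \<delta> {i} (moves \<phi> s))"
    using sat_char[OF assms(1)] game_delta by auto
  have uniq: "\<psi> = \<psi>0" if "\<psi> \<in> token_vars n t \<rightarrow>\<^sub>E UNIV" "all_sat n \<delta> \<phi> t \<psi>" for \<psi>
  proof (rule PiE_ext[OF that(1) in0])
    fix x assume x: "x \<in> token_vars n t"
    then obtain i j s where "x = (i,j,s)" "i \<in> {1..n}" "j \<in> {1..n}" "s \<in> {0..t}"
      unfolding token_vars_def by auto
    then show "\<psi> x = \<psi>0 x"
      using char[OF that(2)] char[OF sat0] by blast
  qed
  have ex: "\<exists>!\<psi>. \<psi> \<in> token_vars n t \<rightarrow>\<^sub>E UNIV \<and> all_sat n \<delta> \<phi> t \<psi>"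
  proof (rule ex1I[of _ \<psi>0])
    show "\<psi>0 \<in> token_vars n t \<rightarrow>\<^sub>E UNIV \<and> all_sat n \<delta> \<phi> t \<psi>0" using in0 sat0 by (rule conjI)
  next
    fix \<psi> assume "\<psi> \<in> token_vars n t \<rightarrow>\<^sub>E UNIV \<and> all_sat n \<delta> \<phi> t \<psi>"
    then show "\<psi> = \<psi>0" using uniq by blast
  qed
  show ?thesis
    apply (rule conjI[OF ex])
  proof (intro allI impI ballI)
    fix \<psi> i j s assume h: "\<psi> \<in> token_vars n t \<rightarrow>\<^sub>E UNIV \<and> all_sat n \<delta> \<phi> t \<psi>"
      and "i \<in> {1..n}" "j \<in> {1..n}" "s \<in> {0..t}"
    then show "(\<psi> (i,j,s) \<longleftrightarrow> game n \<delta> (moves \<phi> s) j i) \<and>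
      (\<psi> (i,j,s) \<longleftrightarrow> j \<in> delta_ext \<delta> {i} (moves \<phi> s))"
      using char[of \<psi> i j s] by blast
  qed
qed

end
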